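(* Let $(\Omega,\mathcal F)$ be a measurable space with $\Sigma\neq\emptyset$, $\nu$ a finite measure, and $\mu$ a finite measure with $\mu\ll\nu$. Let $F_\mu(y)=\nu(\{\omega:\frac{d\mu}{d\nu}(\omega)\le y\})$ ($y\ge0$), $F_\mu^{-1}(\beta)=\inf\{z\ge0: F_\mu(z)>\beta\}$ ($\beta\ge0$), and $v_\mu(A)=\int_0^\infty\min(\nu(\Omega)-F_\mu(z),\nu(A))\,dz$. Then $$v_\mu(A)=\int_{\nu(A^c)}^{\nu(\Omega)}F_\mu^{-1}(\beta)\,d\beta,\qquad A\in\mathcal F.$$
   Context: $\Sigma$ denotes the set of all classes $\mathcal I\subset\mathcal F$ that are chains (totally ordered by inclusion), contain $\emptyset$ and $\Omega$, and generate $\mathcal F$ as a $\sigma$-algebra. $\frac{d\mu}{d\nu}$ is the non-negative Radon–Nikodym derivative. *)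

theory Defs
  imports "HOL-Probability.Probability"
begin

definition Sigma_chains :: "'a measure \<Rightarrow> 'a set set set" where
  "Sigma_chains M = {I. I \<subseteq> sets M \<and> (\<forall>A\<in>I. \<forall>B\<in>I. A \<subseteq> B \<or> B \<subseteq> A)
      \<and> {} \<in> I \<and> space M \<in> I \<and> sigma_sets (space M) I = sets M}"

text \<open>F_mu(y) = nu({omega : dmu/dnu(omega) <= y}); here M = nu, N = mu.\<close>
definition F_mu :: "'a measure \<Rightarrow> 'a measure \<Rightarrow> real \<Rightarrow> real" where
  "F_mu M N y = measure M {\<omega> \<in> space M. RN_deriv M N \<omega> \<le> ennreal y}"

definition F_mu_inv :: "'a measure \<Rightarrow> 'a measure \<Rightarrow> real \<Rightarrow> real" where
  "F_mu_inv M N \<beta> = Inf {z. z \<ge> 0 \<and> F_mu M N z > \<beta>}"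

definition v_mu :: "'a measure \<Rightarrow> 'a measure \<Rightarrow> 'a set \<Rightarrow> real" where
  "v_mu M N A = (LBINT z:{0..}. min (measure M (space M) - F_mu M N z) (measure M A))"

end

theory Submission imports Defs begin

lemma basics:
  fixes M N :: "'a measure"
  assumes fm: "finite_measure M" and fn: "finite_measure N"
    and sN: "sets N = sets M" and ac: "absolutely_continuous M N"
  shows "mono (F_mu M N)"
    and "\<And>z. 0 \<le> F_mu M N z \<and> F_mu M N z \<le> measure M (space M)"
    and "\<And>z. ennreal (measure M (space M) - F_mu M N z) = emeasure M {x\<in>space M. ennreal z < RN_deriv M N x}"
    and "(\<integral>\<^sup>+x. RN_deriv M N x \<partial>M) = emeasure N (space N)"
proof -
  interpret M: finite_measure M by fact
  interpret N: finite_measure N by fact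
  let ?f = "RN_deriv M N"
  show "mono (F_mu M N)"
  proof (rule monoI)
    fix x y :: real assume xy: "x \<le> y"
    have "{\<omega> \<in> space M. RN_deriv M N \<omega> \<le> ennreal x} \<subseteq> {\<omega> \<in> space M. RN_deriv M N \<omega> \<le> ennreal y}"
      using order_trans[OF _ ennreal_leI[OF xy]] by blast
    then show "F_mu M N x \<le> F_mu M N y"
      unfolding F_mu_def by (rule M.finite_measure_mono) measurable
  qed
  show "\<And>z. 0 \<le> F_mu M N z \<and> F_mu M N z \<le> measure M (space M)"
    unfolding F_mu_def by (auto intro!: M.bounded_measure)
  show "ennreal (measure M (space M) - F_mu M N z) = emeasure M {x\<in>space M. ennreal z < RN_deriv M N x}" for z
  proof -
    have e: "space M - {x\<in>space M. ?f x \<le> ennreal z} = {x\<in>space M. ennreal z < ?f x}" by auto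
    have "measure M (space M) - F_mu M N z = measure M {x\<in>space M. ennreal z < ?f x}"
      unfolding F_mu_def by (subst M.finite_measure_compl[symmetric]) (auto simp: e)
    then show ?thesis by (simp add: M.emeasure_eq_measure)
  qed
  show "(\<integral>\<^sup>+x. RN_deriv M N x \<partial>M) = emeasure N (space N)"
    using M.RN_deriv_nn_integral[OF ac sN, of "\<lambda>_. 1"] by (simp add: nn_integral_const)
qed

lemma inv_meas:
  fixes F :: "real \<Rightarrow> real" and \<beta> :: real
  assumes mF: "mono F" and ex: "\<exists>z\<ge>0. F z > \<beta>"
  shows "0 \<le> Inf {z. z \<ge> 0 \<and> F z > \<beta>}"
    and "emeasure lborel {z. 0 \<le> z \<and> F z \<le> \<beta>} = ennreal (Inf {z. z \<ge> 0 \<and> F z > \<beta>})"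
proof -
  let ?S = "{z. z \<ge> 0 \<and> F z > \<beta>}"
  let ?q = "Inf ?S"
  have ne: "?S \<noteq> {}" using ex by auto
  have bdd: "bdd_below ?S" by (rule bdd_belowI[of _ 0]) auto
  show q0: "0 \<le> ?q" by (rule cInf_greatest[OF ne]) auto
  have [measurable]: "F \<in> borel_measurable borel" using borel_measurable_mono[OF mF] .
  have Tm: "{z. 0 \<le> z \<and> F z \<le> \<beta>} \<in> sets lborel" by measurable
  have sub1: "{0..<?q} \<subseteq> {z. 0 \<le> z \<and> F z \<le> \<beta>}"
  proof
    fix z assume z: "z \<in> {0..<?q}"
    show "z \<in> {z. 0 \<le> z \<and> F z \<le> \<beta>}"
    proof (rule ccontr)
      assume "z \<notin> {z. 0 \<le> z \<and> F z \<le> \<beta>}"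
      then have "z \<in> ?S" using z by auto
      then have "?q \<le> z" by (rule cInf_lower[OF _ bdd])
      then show False using z by auto
    qed
  qed
  have sub2: "{z. 0 \<le> z \<and> F z \<le> \<beta>} \<subseteq> {0..?q}"
  proof
    fix z assume z: "z \<in> {z. 0 \<le> z \<and> F z \<le> \<beta>}"
    have "z \<le> ?q"
    proof (rule cInf_greatest[OF ne])
      fix w assume w: "w \<in> ?S"
      show "z \<le> w"
      proof (rule ccontr)
        assume "\<not> z \<le> w"
        then have "F w \<le> F z" using mF by (auto simp: mono_def)
        then show False using w z by auto
      qed
    qed
    then show "z \<in> {0..?q}" using z by auto
  qed
  have "emeasure lborel {0..<?q} \<le> emeasure lborel {z. 0 \<le> z \<and> F z \<le> \<beta>}"
    by (rule emeasure_mono[OF sub1 Tm])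
  moreover have "emeasure lborel {z. 0 \<le> z \<and> F z \<le> \<beta>} \<le> emeasure lborel {0..?q}"
    by (rule emeasure_mono[OF sub2]) simp
  ultimately show "emeasure lborel {z. 0 \<le> z \<and> F z \<le> \<beta>} = ennreal ?q"
    using q0 by (simp add: antisym)
qed

lemma markov_ex:
  fixes M N :: "'a measure"
  assumes fm: "finite_measure M" and fn: "finite_measure N"
    and sN: "sets N = sets M" and ac: "absolutely_continuous M N"
    and b: "\<beta> < measure M (space M)"
    and c1: "\<And>z. ennreal (measure M (space M) - F_mu M N z) = emeasure M {x\<in>space M. ennreal z < RN_deriv M N x}"
    and c2: "(\<integral>\<^sup>+x. RN_deriv M N x \<partial>M) = emeasure N (space N)"
  shows "\<exists>z\<ge>0. F_mu M N z > \<beta>"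
proof -
  interpret M: finite_measure M by fact
  interpret N: finite_measure N by fact
  let ?f = "RN_deriv M N"
  let ?m = "measure M (space M)"
  define C where "C = measure N (space N)"
  have C0: "0 \<le> C" by (simp add: C_def)
  define z where "z = (C + 1) / (?m - \<beta>)"
  have z0: "0 < z" using b C0 by (simp add: z_def)
  have "ennreal z * emeasure M {x\<in>space M. ennreal z < ?f x} = (\<integral>\<^sup>+x. ennreal z * indicator {x\<in>space M. ennreal z < ?f x} x \<partial>M)"
    by (rule nn_integral_cmult_indicator[symmetric]) measurable
  also have "\<dots> \<le> (\<integral>\<^sup>+x. ?f x \<partial>M)"
    by (rule nn_integral_mono) (auto simp: indicator_def less_imp_le)
  also have "\<dots> = ennreal C" using c2 by (simp add: C_def N.emeasure_eq_measure)
  finally have "ennreal z * ennreal (?m - F_mu M N z) \<le> ennreal C" using c1 by simp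
  then have "z * (?m - F_mu M N z) \<le> C"
    using z0 C0 by (simp add: ennreal_mult'[symmetric] del: ennreal_mult' )
  then have "?m - F_mu M N z \<le> C / z" using z0 by (simp add: field_simps)
  also have "C / z < ?m - \<beta>" using b C0 by (simp add: z_def field_simps)
  finally show ?thesis using z0 by (intro exI[of _ z]) auto
qed

theorem proposition15:
  fixes M N :: "'a measure"
  assumes "Sigma_chains M \<noteq> {}"
    and "finite_measure M"
    and "finite_measure N"
    and "sets N = sets M"
    and "absolutely_continuous M N"
    and "A \<in> sets M"
  shows "v_mu M N A = (LBINT \<beta>:{measure M (space M - A)..measure M (space M)}. F_mu_inv M N \<beta>)"
proof -
  note fm = assms(2) and fn = assms(3) and sN = assms(4) and ac = assms(5) and A = assms(6)
  interpret M: finite_measure M by fact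
  interpret N: finite_measure N by fact
  let ?f = "RN_deriv M N"
  define F where "F = F_mu M N"
  define G where "G = F_mu_inv M N"
  define m where "m = measure M (space M)"
  define a where "a = measure M A"
  note B = basics[OF fm fn sN ac, folded F_def m_def]
  have mF: "mono F" by (rule B(1))
  have F0: "0 \<le> F z" "F z \<le> m" for z using B(2)[of z] by auto
  have a0: "0 \<le> a" "a \<le> m" unfolding a_def m_def by (auto intro!: M.bounded_measure)
  have Fm[measurable]: "F \<in> borel_measurable borel" using borel_measurable_mono[OF mF] .
  have compl: "measure M (space M - A) = m - a"
    unfolding m_def a_def by (rule M.finite_measure_compl[OF A])
  have ex: "\<exists>z\<ge>0. F z > \<beta>" if "\<beta> < m" for \<beta>
    using markov_ex[OF fm fn sN ac _ basics(3)[OF fm fn sN ac] basics(4)[OF fm fn sN ac], of \<beta>] that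
    by (simp add: F_def m_def)
  have Ginv: "0 \<le> G \<beta>" "emeasure lborel {z. 0 \<le> z \<and> F z \<le> \<beta>} = ennreal (G \<beta>)" if "\<beta> < m" for \<beta>
    using inv_meas[OF mF ex[OF that]] by (simp_all add: G_def F_mu_inv_def F_def)

  define P2 where "P2 = {p \<in> space (M \<Otimes>\<^sub>M lborel). 0 \<le> snd p \<and> ennreal (snd p) < ?f (fst p)}"
  have P2m[measurable]: "P2 \<in> sets (M \<Otimes>\<^sub>M lborel)" unfolding P2_def by measurable
  interpret P: pair_sigma_finite M lborel
    by (simp add: pair_sigma_finite_def M.sigma_finite_measure_axioms lborel.sigma_finite_measure_axioms)
  have Lc: "(\<integral>\<^sup>+ z. ennreal (indicator {0..} z * (m - F z)) \<partial>lborel) \<le> (\<integral>\<^sup>+x. ?f x \<partial>M)"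
  proof -
    have "(\<integral>\<^sup>+ z. ennreal (indicator {0..} z * (m - F z)) \<partial>lborel)
        = (\<integral>\<^sup>+ z. (\<integral>\<^sup>+ x. indicator P2 (x, z) \<partial>M) \<partial>lborel)"
    proof (rule nn_integral_cong)
      fix z :: real
      show "ennreal (indicator {0..} z * (m - F z)) = (\<integral>\<^sup>+ x. indicator P2 (x, z) \<partial>M)"
      proof (cases "0 \<le> z")
        case True
        have "(\<integral>\<^sup>+ x. indicator P2 (x, z) \<partial>M) = (\<integral>\<^sup>+ x. indicator {x\<in>space M. ennreal z < ?f x} x \<partial>M)"
          by (rule nn_integral_cong) (auto simp: P2_def indicator_def space_pair_measure True)
        also have "\<dots> = emeasure M {x\<in>space M. ennreal z < ?f x}" by (rule nn_integral_indicator) measurable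
        finally show ?thesis using True B(3)[of z] by simp
      next
        case False
        then show ?thesis by (simp add: P2_def indicator_def)
      qed
    qed
    also have "\<dots> = (\<integral>\<^sup>+ x. (\<integral>\<^sup>+ z. indicator P2 (x, z) \<partial>lborel) \<partial>M)"
      by (rule P.Fubini') simp
    also have "\<dots> \<le> (\<integral>\<^sup>+x. ?f x \<partial>M)"
    proof (rule nn_integral_mono)
      fix x assume x: "x \<in> space M"
      have "(\<integral>\<^sup>+ z. indicator P2 (x, z) \<partial>lborel) = (\<integral>\<^sup>+ z. indicator {z. 0 \<le> z \<and> ennreal z < ?f x} z \<partial>lborel)"
        by (rule nn_integral_cong) (auto simp: P2_def indicator_def space_pair_measure x)
      also have "\<dots> = emeasure lborel {z. 0 \<le> z \<and> ennreal z < ?f x}" by (rule nn_integral_indicator) measurable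
      also have "\<dots> \<le> ?f x"
      proof (cases "?f x" rule: ennreal_cases)
        case (real r)
        have "emeasure lborel {z. 0 \<le> z \<and> ennreal z < ?f x} \<le> emeasure lborel {0..r}"
          by (rule emeasure_mono) (auto simp: real ennreal_less_iff)
        then show ?thesis using real by simp
      qed simp
      finally show "(\<integral>\<^sup>+ z. indicator P2 (x, z) \<partial>lborel) \<le> ?f x" .
    qed
    finally show ?thesis .
  qed
  have finf: "(\<integral>\<^sup>+x. ?f x \<partial>M) < \<infinity>" using B(4) by (simp add: less_top[symmetric])

  define S where "S = {p \<in> space (lborel \<Otimes>\<^sub>M lborel). 0 \<le> fst p \<and> m - a \<le> snd p \<and> snd p < m \<and> F (fst p) \<le> snd p}"
  have Sm[measurable]: "S \<in> sets (lborel \<Otimes>\<^sub>M lborel)" unfolding S_def by measurable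
  define h where "h z = indicator {0..} z * min (m - F z) a" for z
  define k where "k \<beta> = indicator {m-a..<m} \<beta> * G \<beta>" for \<beta>
  have inner1: "(\<integral>\<^sup>+ \<beta>. indicator S (z, \<beta>) \<partial>lborel) = ennreal (h z)" for z
  proof (cases "0 \<le> z")
    case True
    have "(\<integral>\<^sup>+ \<beta>. indicator S (z, \<beta>) \<partial>lborel) = (\<integral>\<^sup>+ \<beta>. indicator {max (m-a) (F z) ..< m} \<beta> \<partial>lborel)"
      by (rule nn_integral_cong) (auto simp: S_def indicator_def True space_pair_measure)
    also have "\<dots> = ennreal (m - max (m-a) (F z))" using F0[of z] a0 by simp
    also have "m - max (m-a) (F z) = h z" using True by (simp add: h_def)
    finally show ?thesis .
  next
    case False
    then show ?thesis by (simp add: S_def h_def indicator_def)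
  qed
  have inner2: "(\<integral>\<^sup>+ z. indicator S (z, \<beta>) \<partial>lborel) = ennreal (k \<beta>)" for \<beta>
  proof (cases "m - a \<le> \<beta> \<and> \<beta> < m")
    case True
    have "(\<integral>\<^sup>+ z. indicator S (z, \<beta>) \<partial>lborel) = (\<integral>\<^sup>+ z. indicator {z. 0 \<le> z \<and> F z \<le> \<beta>} z \<partial>lborel)"
      by (rule nn_integral_cong) (auto simp: S_def indicator_def True space_pair_measure)
    also have "\<dots> = emeasure lborel {z. 0 \<le> z \<and> F z \<le> \<beta>}" by (rule nn_integral_indicator) measurable
    also have "\<dots> = ennreal (k \<beta>)" using Ginv[of \<beta>] True by (simp add: k_def)
    finally show ?thesis .
  next
    case False
    then show ?thesis by (auto simp: S_def k_def indicator_def)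
  qed
  have EQ: "(\<integral>\<^sup>+ z. ennreal (h z) \<partial>lborel) = (\<integral>\<^sup>+ \<beta>. ennreal (k \<beta>) \<partial>lborel)"
    using lborel_pair.Fubini'[of "\<lambda>z \<beta>. indicator S (z, \<beta>)"] by (simp add: inner1 inner2)
  have hm[measurable]: "h \<in> borel_measurable lborel" unfolding h_def by measurable
  have k0: "0 \<le> k \<beta>" for \<beta> using Ginv[of \<beta>] by (auto simp: k_def indicator_def)
  have km[measurable]: "k \<in> borel_measurable lborel"
  proof -
    have "(\<lambda>\<beta>. enn2real (\<integral>\<^sup>+ z. indicator S (z, \<beta>) \<partial>lborel)) \<in> borel_measurable lborel"
    proof -
      have sw: "(\<lambda>p. indicator S (snd p, fst p) :: ennreal) \<in> borel_measurable (lborel \<Otimes>\<^sub>M lborel)"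
        by (rule measurable_compose[OF measurable_Pair[OF measurable_snd measurable_fst] borel_measurable_indicator[OF Sm]])
      have "(\<lambda>\<beta>. \<integral>\<^sup>+ z. indicator S (snd (\<beta>, z), fst (\<beta>, z)) \<partial>lborel) \<in> borel_measurable lborel"
        by (rule lborel.borel_measurable_nn_integral_fst[OF sw])
      then have "(\<lambda>\<beta>. \<integral>\<^sup>+ z. indicator S (z, \<beta>) \<partial>lborel) \<in> borel_measurable lborel"
        by (simp only: fst_conv snd_conv)
      then show ?thesis by (rule borel_measurable_enn2real)
    qed
    moreover have "(\<lambda>\<beta>. enn2real (\<integral>\<^sup>+ z. indicator S (z, \<beta>) \<partial>lborel)) = k"
      using k0 by (simp add: inner2)
    ultimately show ?thesis by simp
  qed
  have hfin: "(\<integral>\<^sup>+ z. ennreal (h z) \<partial>lborel) < \<infinity>"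
  proof -
    have "(\<integral>\<^sup>+ z. ennreal (h z) \<partial>lborel) \<le> (\<integral>\<^sup>+ z. ennreal (indicator {0..} z * (m - F z)) \<partial>lborel)"
      by (rule nn_integral_mono) (auto simp: h_def indicator_def intro!: ennreal_leI)
    also note Lc
    finally show ?thesis using finf by (simp add: order.strict_trans1)
  qed
  obtain r where r0: "0 \<le> r" and hr: "(\<integral>\<^sup>+ z. ennreal (h z) \<partial>lborel) = ennreal r"
    using hfin by (cases "(\<integral>\<^sup>+ z. ennreal (h z) \<partial>lborel)" rule: ennreal_cases) auto
  have h0: "0 \<le> h z" for z using F0[of z] a0 by (simp add: h_def indicator_def)
  have hint: "integral\<^sup>L lborel h = r"
    using nn_integral_eq_integrable[OF hm _ r0] hr h0 by auto
  have kint: "integral\<^sup>L lborel k = r"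
    using nn_integral_eq_integrable[OF km _ r0] hr EQ k0 by auto
  have lhs: "v_mu M N A = integral\<^sup>L lborel h"
    unfolding v_mu_def set_lebesgue_integral_def h_def F_def m_def a_def by simp
  define k2 where "k2 \<beta> = indicator {m-a..m} \<beta> * G \<beta>" for \<beta>
  have k2eq: "k2 = (\<lambda>\<beta>. k \<beta> + indicator {m} \<beta> * G m)"
    using a0 by (auto simp: k2_def k_def indicator_def fun_eq_iff)
  have k2m: "k2 \<in> borel_measurable lborel" unfolding k2eq by measurable
  have rhs: "(LBINT \<beta>:{measure M (space M - A)..measure M (space M)}. F_mu_inv M N \<beta>) = integral\<^sup>L lborel k2"
    unfolding set_lebesgue_integral_def k2_def compl G_def m_def by simp
  have "integral\<^sup>L lborel k2 = integral\<^sup>L lborel k"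
    by (rule integral_cong_AE[OF k2m km]) (use AE_lborel_singleton[of m] in \<open>auto simp: k2eq\<close>)
  then show ?thesis using lhs rhs hint kint by simp
qed

end
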